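(* Let $G$ be a group and $f:G\to\mathbb{R}$ a nonzero homogeneous quasimorphism. Then there exist a partial order $\preceq$ on $G$ and a bijection $T:G\to G$ such that $(G,\preceq,T)$ is a quasi-total triple, the action of $G$ on itself by left multiplication is an effective, dominating action by automorphisms of $(G,\preceq,T)$ (so the induced order $\leq$ on $G$ is a special quasi-total order), and $f$ is a multiple of a growth function $\gamma_g$ ($g\in G^{++}$) of $\leq$.
   Context: A quasimorphism is $f:G\to\mathbb{R}$ with $\sup_{h,k}|f(hk)-f(h)-f(k)|<\infty$; homogeneous if $f(h^n)=nf(h)$ for $n\in\mathbb{N}$. For a poset $(X,\preceq)$, an order-preserving bijection $T$ is dominant if for all $a,b$ there is $n\in\mathbb{N}$ with $T^na\succ b$. $(X,\preceq,T)$ is a quasi-total triple if $T$ is a dominant order-preserving bijection and there is $N\in\mathbb{N}$ such that for all $a,b$ some $k\in\{0,\dots,N\}$ satisfies $a\preceq T^kb$ or $b\preceq T^ka$. An action of $G$ by automorphisms on $(X,\preceq,T)$ is by order-preserving bijections commuting with $T$; it is dominating if there exist $g\in G,x\in X,n\in\mathbb{N}$ with $g.x\succeq T^n.x$. For an effective action, the induced order on $G$ is $g\leq h\Leftrightarrow\forall k\in G\,\forall x\in X:(kg).x\preceq(kh).x$; an order induced in this way from an effective dominating action on a quasi-total triple is called a special quasi-total order. For a bi-invariant partial order $\leq$ on $G$: $G^+=\{g\geq e\}$, $G^{++}=\{g\in G^+\setminus\{e\}:\forall h\,\exists n\in\mathbb{N}_0,\ g^n\geq h\}$, and for $g\in G^{++}$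 the growth function is $\gamma_g(h)=\lim_{n\to\infty}\frac1n\inf\{p\in\mathbb{Z}: g^p\geq h^n\}$. *)

theory Defs
  imports Complex_Main
begin

text \<open>Groups are rendered via the type class group_add (not necessarily commutative);
the group operation is written +, the identity 0.\<close>

fun gpow :: "nat \<Rightarrow> 'a::monoid_add \<Rightarrow> 'a" where
  "gpow 0 x = 0"
| "gpow (Suc n) x = x + gpow n x"

definition gpow_int :: "int \<Rightarrow> 'a::group_add \<Rightarrow> 'a" where
  "gpow_int k x = (if 0 \<le> k then gpow (nat k) x else - gpow (nat (- k)) x)"

definition quasimorphism :: "('a::group_add \<Rightarrow> real) \<Rightarrow> bool" where
  "quasimorphism f \<longleftrightarrow> (\<exists>D. \<forall>h k. \<bar>f (h + k) - f h - f k\<bar> \<le> D)"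

definition homogeneous :: "('a::group_add \<Rightarrow> real) \<Rightarrow> bool" where
  "homogeneous f \<longleftrightarrow> (\<forall>h n. f (gpow n h) = real n * f h)"

definition partial_order_rel :: "('x \<Rightarrow> 'x \<Rightarrow> bool) \<Rightarrow> bool" where
  "partial_order_rel le \<longleftrightarrow> (\<forall>a. le a a) \<and> (\<forall>a b c. le a b \<longrightarrow> le b c \<longrightarrow> le a c)
     \<and> (\<forall>a b. le a b \<longrightarrow> le b a \<longrightarrow> a = b)"

definition order_preserving_bij :: "('x \<Rightarrow> 'x \<Rightarrow> bool) \<Rightarrow> ('x \<Rightarrow> 'x) \<Rightarrow> bool" where
  "order_preserving_bij le T \<longleftrightarrow> bij T \<and> (\<forall>a b. le a b \<longrightarrow> le (T a) (T b))"

definition dominant :: "('x \<Rightarrow> 'x \<Rightarrow> bool) \<Rightarrow> ('x \<Rightarrow> 'x) \<Rightarrow> bool" where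
  "dominant le T \<longleftrightarrow> (\<forall>a b. \<exists>n::nat. le b ((T ^^ n) a) \<and> b \<noteq> (T ^^ n) a)"

definition quasi_total_triple :: "('x \<Rightarrow> 'x \<Rightarrow> bool) \<Rightarrow> ('x \<Rightarrow> 'x) \<Rightarrow> bool" where
  "quasi_total_triple le T \<longleftrightarrow> partial_order_rel le \<and> order_preserving_bij le T \<and> dominant le T
     \<and> (\<exists>N::nat. \<forall>a b. \<exists>k\<le>N. le a ((T ^^ k) b) \<or> le b ((T ^^ k) a))"

definition group_action :: "('a::group_add \<Rightarrow> 'x \<Rightarrow> 'x) \<Rightarrow> bool" where
  "group_action act \<longleftrightarrow> act 0 = id \<and> (\<forall>g h. act (g + h) = act g \<circ> act h)"

definition action_by_automorphisms ::
  "('x \<Rightarrow> 'x \<Rightarrow> bool) \<Rightarrow> ('x \<Rightarrow> 'x) \<Rightarrow> ('a::group_add \<Rightarrow> 'x \<Rightarrow> 'x) \<Rightarrow> bool" where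
  "action_by_automorphisms le T act \<longleftrightarrow> group_action act \<and>
     (\<forall>g. order_preserving_bij le (act g) \<and> act g \<circ> T = T \<circ> act g)"

definition effective_action :: "('a::group_add \<Rightarrow> 'x \<Rightarrow> 'x) \<Rightarrow> bool" where
  "effective_action act \<longleftrightarrow> (\<forall>g. act g = id \<longrightarrow> g = 0)"

definition dominating_action ::
  "('x \<Rightarrow> 'x \<Rightarrow> bool) \<Rightarrow> ('x \<Rightarrow> 'x) \<Rightarrow> ('a::group_add \<Rightarrow> 'x \<Rightarrow> 'x) \<Rightarrow> bool" where
  "dominating_action le T act \<longleftrightarrow> (\<exists>g x. \<exists>n::nat. le ((T ^^ n) x) (act g x))"

definition induced_order ::
  "('x \<Rightarrow> 'x \<Rightarrow> bool) \<Rightarrow> ('a::group_add \<Rightarrow> 'x \<Rightarrow> 'x) \<Rightarrow> 'a \<Rightarrow> 'a \<Rightarrow> bool" where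
  "induced_order le act g h \<longleftrightarrow> (\<forall>k x. le (act (k + g) x) (act (k + h) x))"

definition pos_cone :: "('a::group_add \<Rightarrow> 'a \<Rightarrow> bool) \<Rightarrow> 'a set" where
  "pos_cone leq = {g. leq 0 g}"

definition dominant_cone :: "('a::group_add \<Rightarrow> 'a \<Rightarrow> bool) \<Rightarrow> 'a set" where
  "dominant_cone leq = {g \<in> pos_cone leq. g \<noteq> 0 \<and> (\<forall>h. \<exists>n::nat. leq h (gpow n g))}"

definition growth_seq :: "('a::group_add \<Rightarrow> 'a \<Rightarrow> bool) \<Rightarrow> 'a \<Rightarrow> 'a \<Rightarrow> nat \<Rightarrow> real" where
  "growth_seq leq g h n = real_of_int (Inf {p::int. leq (gpow n h) (gpow_int p g)}) / real n"

definition growth_function :: "('a::group_add \<Rightarrow> 'a \<Rightarrow> bool) \<Rightarrow> 'a \<Rightarrow> 'a \<Rightarrow> real" where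
  "growth_function leq g h = lim (growth_seq leq g h)"

end

theory Submission
  imports Defs
begin

lemma gpow_comm: "gpow n x + x = x + (gpow n x :: 'a::monoid_add)"
  by (induction n) (simp_all add: add.assoc)

lemma gpow_Suc': "gpow (Suc n) x = gpow n x + (x :: 'a::monoid_add)"
  using gpow_comm[of n x] by simp

lemma gpow_neg: "gpow n (-x) = - gpow n (x :: 'a::group_add)"
proof (induction n)
  case 0 then show ?case by simp
next
  case (Suc n)
  have "gpow (Suc n) (-x) = -x + - gpow n x" using Suc by simp
  also have "\<dots> = - (gpow n x + x)" by (simp only: minus_add)
  also have "\<dots> = - gpow (Suc n) x" by (simp only: gpow_Suc')
  finally show ?case .
qed

lemma gpow_conj: "gpow n (-x + w + x) = -x + gpow n w + (x :: 'a::group_add)"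
  by (induction n) (simp_all add: add.assoc)

lemma funpow_T: "((\<lambda>y. y + t) ^^ n) a = a + gpow n (t :: 'a::monoid_add)"
proof (induction n)
  case 0 then show ?case by simp
next
  case (Suc n)
  have "((\<lambda>y. y + t) ^^ Suc n) a = (a + gpow n t) + t" using Suc by simp
  also have "\<dots> = a + gpow (Suc n) t" by (simp only: gpow_Suc' add.assoc)
  finally show ?case .
qed

lemma small_zero:
  assumes "\<And>n::nat. real n * \<bar>y\<bar> \<le> B" shows "y = 0"
proof (rule ccontr)
  assume "y \<noteq> 0"
  hence p: "\<bar>y\<bar> > 0" by simp
  obtain n :: nat where "B / \<bar>y\<bar> < real n" using reals_Archimedean2 by blast
  hence "B < real n * \<bar>y\<bar>" using p by (simp add: field_simps)
  with assms[of n] show False by simp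
qed

locale qm =
  fixes f :: "'a::group_add \<Rightarrow> real" and D :: real
  assumes qd: "\<And>h k. \<bar>f (h + k) - f h - f k\<bar> \<le> D"
    and hom: "\<And>n h. f (gpow n h) = real n * f h"
begin

lemma D_nonneg: "0 \<le> D"
  using qd[of 0 0] by simp

lemma f0: "f 0 = 0"
  using hom[of 0] by simp

lemma fneg: "f (-h) = - f h"
proof -
  have "real n * \<bar>f h + f (-h)\<bar> \<le> D" for n
  proof -
    have "gpow n h + gpow n (-h) = 0" by (simp add: gpow_neg)
    hence "\<bar>f 0 - f (gpow n h) - f (gpow n (-h))\<bar> \<le> D" using qd[of "gpow n h" "gpow n (-h)"] by simp
    hence "\<bar>real n * (f h + f (-h))\<bar> \<le> D" by (simp add: hom f0 algebra_simps)
    thus ?thesis by (simp add: abs_mult)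
  qed
  hence "f h + f (-h) = 0" by (rule small_zero)
  thus ?thesis by simp
qed

lemma conj_approx: "\<bar>f (-x + b + x) - f b\<bar> \<le> 2 * D"
proof -
  have 1: "\<bar>f ((-x + b) + x) - f (-x + b) - f x\<bar> \<le> D" by (rule qd)
  have 2: "\<bar>f (-x + b) - f (-x) - f b\<bar> \<le> D" by (rule qd)
  show ?thesis using 1 2 fneg[of x] by simp
qed

lemma fconj: "f (-x + w + x) = f w"
proof -
  have "real n * \<bar>f (-x + w + x) - f w\<bar> \<le> 2 * D" for n
  proof -
    have "\<bar>f (-x + gpow n w + x) - f (gpow n w)\<bar> \<le> 2 * D" by (rule conj_approx)
    moreover have "f (-x + gpow n w + x) = real n * f (-x + w + x)"
      using hom[of n "-x + w + x"] gpow_conj[of n x w] by simp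
    ultimately have "\<bar>real n * (f (-x + w + x) - f w)\<bar> \<le> 2 * D"
      by (simp add: hom algebra_simps)
    thus ?thesis by (simp add: abs_mult)
  qed
  hence "f (-x + w + x) - f w = 0" by (rule small_zero)
  thus ?thesis by simp
qed

lemma fdiff: "\<bar>f (-x + y) - (f y - f x)\<bar> \<le> D"
  using qd[of "-x" y] fneg[of x] by simp

lemma fsum_ge: "f (x + y) \<ge> f x + f y - D"
  using qd[of x y] by simp

lemma fgpow_int: "f (gpow_int p t) = real_of_int p * f t"
  by (simp add: gpow_int_def hom fneg)

lemma exists_big: assumes "f \<noteq> (\<lambda>_. 0)" shows "\<exists>t. f t \<ge> B"
proof -
  obtain h0 where h0: "f h0 \<noteq> 0" using assms by auto
  obtain h1 where h1: "f h1 > 0"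
  proof (cases "f h0 > 0")
    case True then show ?thesis using that by blast
  next
    case False then show ?thesis using that[of "-h0"] h0 fneg[of h0] by simp
  qed
  obtain n :: nat where "B / f h1 < real n" using reals_Archimedean2 by blast
  hence "B < real n * f h1" using h1 by (simp add: field_simps)
  hence "f (gpow n h1) \<ge> B" by (simp add: hom)
  thus ?thesis by blast
qed

lemma growth:
  assumes F: "f t \<ge> 2 * D + 1"
  shows "growth_seq (\<lambda>g h. g = h \<or> D + 1 \<le> f (-g + h)) t h \<longlonglongrightarrow> f h / f t"
proof -
  define F where "F = f t"
  define a where "a = f h"
  have Fpos: "F > 0" using F D_nonneg F_def by simp
  define K where "K = (2 * D + 1) / F + 1"
  have bnd: "a / F \<le> growth_seq (\<lambda>g h. g = h \<or> D + 1 \<le> f (-g + h)) t h n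
      \<and> growth_seq (\<lambda>g h. g = h \<or> D + 1 \<le> f (-g + h)) t h n \<le> a / F + K / real n"
    if n1: "n \<ge> 1" for n
  proof -
    define S where "S = {p::int. gpow n h = gpow_int p t \<or> D + 1 \<le> f (-gpow n h + gpow_int p t)}"
    have v: "\<bar>f (-gpow n h + gpow_int p t) - (real_of_int p * F - real n * a)\<bar> \<le> D" for p
      using fdiff[of "gpow n h" "gpow_int p t"] by (simp add: fgpow_int hom F_def a_def)
    have memlb: "real n * a / F \<le> real_of_int p" if "p \<in> S" for p
    proof -
      have "real n * a \<le> real_of_int p * F"
      proof (cases "gpow n h = gpow_int p t")
        case True
        hence "f (gpow n h) = f (gpow_int p t)" by simp
        thus ?thesis by (simp add: fgpow_int hom F_def a_def)
      next
        case False
        hence "D + 1 \<le> f (-gpow n h + gpow_int p t)" using that S_def by simp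
        thus ?thesis using v[of p] by simp
      qed
      thus ?thesis using Fpos by (simp add: field_simps)
    qed
    hence memlb': "\<lceil>real n * a / F\<rceil> \<le> p" if "p \<in> S" for p
      using that by (simp add: ceiling_le_iff)
    define p1 where "p1 = \<lceil>(real n * a + 2 * D + 1) / F\<rceil>"
    have "(real n * a + 2 * D + 1) / F \<le> real_of_int p1" unfolding p1_def by simp
    hence "real n * a + 2 * D + 1 \<le> real_of_int p1 * F" using Fpos by (simp add: field_simps)
    hence "D + 1 \<le> f (-gpow n h + gpow_int p1 t)" using v[of p1] by simp
    hence p1S: "p1 \<in> S" unfolding S_def by simp
    have bb: "bdd_below S" using memlb' unfolding bdd_below_def by blast
    have I1: "\<lceil>real n * a / F\<rceil> \<le> Inf S" using p1S memlb' by (intro cInf_greatest) auto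
    have I2: "Inf S \<le> p1" using p1S bb by (rule cInf_lower)
    have r1: "real n * a / F \<le> real_of_int (Inf S)"
      using I1 le_of_int_ceiling order_trans by (metis of_int_le_iff)
    have r2: "real_of_int (Inf S) \<le> (real n * a + 2 * D + 1) / F + 1"
    proof -
      have "real_of_int p1 \<le> (real n * a + 2 * D + 1) / F + 1" unfolding p1_def by linarith
      thus ?thesis using I2 by (meson of_int_le_iff order_trans)
    qed
    have eq: "growth_seq (\<lambda>g h. g = h \<or> D + 1 \<le> f (-g + h)) t h n = real_of_int (Inf S) / real n"
      unfolding growth_seq_def S_def by simp
    have np: "real n > 0" using n1 by simp
    have "a / F = (real n * a / F) / real n" using np by simp
    also have "\<dots> \<le> real_of_int (Inf S) / real n" by (rule divide_right_mono[OF r1]) (use np in simp)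
    finally have L: "a / F \<le> real_of_int (Inf S) / real n" .
    have "real_of_int (Inf S) / real n \<le> ((real n * a + 2 * D + 1) / F + 1) / real n"
      using r2 np by (simp add: divide_right_mono)
    also have "\<dots> = a / F + K / real n" using np Fpos unfolding K_def by (simp add: field_simps)
    finally show ?thesis using L eq by simp
  qed
  have "(\<lambda>n. a / F + K / real n) \<longlonglongrightarrow> a / F + 0"
    by (intro tendsto_intros)
  hence up: "(\<lambda>n. a / F + K / real n) \<longlonglongrightarrow> a / F" by simp
  have ev: "eventually (\<lambda>n. n \<ge> (1::nat)) sequentially" by (rule eventually_ge_at_top)
  show ?thesis unfolding F_def[symmetric] a_def[symmetric]
    apply (rule tendsto_sandwich[OF _ _ tendsto_const up])
    unfolding eventually_sequentially using bnd by blast+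
qed

end

theorem proposition1p8:
  fixes f :: "'a::group_add \<Rightarrow> real"
  assumes "quasimorphism f" and "homogeneous f" and "f \<noteq> (\<lambda>_. 0)"
  shows "\<exists>(le :: 'a \<Rightarrow> 'a \<Rightarrow> bool) (T :: 'a \<Rightarrow> 'a).
           quasi_total_triple le T
         \<and> action_by_automorphisms le T (\<lambda>g x. g + x)
         \<and> effective_action (\<lambda>g x::'a. g + x)
         \<and> dominating_action le T (\<lambda>g x. g + x)
         \<and> (\<exists>g \<in> dominant_cone (induced_order le (\<lambda>g x. g + x)).
              (\<forall>h. convergent (growth_seq (induced_order le (\<lambda>g x. g + x)) g h))
            \<and> (\<exists>c::real. \<forall>h. f h = c * growth_function (induced_order le (\<lambda>g x. g + x)) g h))"
proof -
  obtain D where qd: "\<And>h k. \<bar>f (h + k) - f h - f k\<bar> \<le> D"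
    using assms(1) unfolding quasimorphism_def by blast
  interpret qm f D using qd assms(2) unfolding homogeneous_def by unfold_locales auto
  obtain t where t: "f t \<ge> 2 * D + 1" using exists_big assms(3) by blast
  define C where "C = D + 1"
  have Ft: "f t \<ge> 1" using t D_nonneg by simp
  have Cpos: "C > 0" using D_nonneg C_def by simp
  define le :: "'a \<Rightarrow> 'a \<Rightarrow> bool" where "le = (\<lambda>x y. x = y \<or> C \<le> f (-x + y))"
  define T :: "'a \<Rightarrow> 'a" where "T = (\<lambda>y. y + t)"
  have strict: "le x y \<and> x \<noteq> y" if "C \<le> f (-x + y)" for x y
  proof -
    have "x \<noteq> y" using that Cpos f0 by auto
    thus ?thesis using that le_def by simp
  qed
  have po: "partial_order_rel le"
    unfolding partial_order_rel_def
  proof (intro conjI allI impI)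
    fix a show "le a a" by (simp add: le_def)
  next
    fix a b c assume ab: "le a b" and bc: "le b c"
    show "le a c"
    proof (cases "a = b \<or> b = c")
      case True thus ?thesis using ab bc by auto
    next
      case False
      hence "C \<le> f (-a + b)" "C \<le> f (-b + c)" using ab bc le_def by auto
      moreover have "f (-a + c) \<ge> f (-a + b) + f (-b + c) - D"
        using fsum_ge[of "-a + b" "-b + c"] by (simp add: add.assoc)
      ultimately show ?thesis using D_nonneg C_def le_def by auto
    qed
  next
    fix a b assume ab: "le a b" and ba: "le b a"
    show "a = b"
    proof (rule ccontr)
      assume "a \<noteq> b"
      hence "C \<le> f (-a + b)" "C \<le> f (-b + a)" using ab ba le_def by auto
      moreover have "-b + a = - (-a + b)" by (simp add: minus_add)
      ultimately show False using fneg[of "-a + b"] Cpos by simp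
    qed
  qed
  have bijT: "bij T"
    by (rule o_bij[of "\<lambda>x. x - t"]) (auto simp: T_def fun_eq_iff)
  have opT: "order_preserving_bij le T"
    unfolding order_preserving_bij_def
  proof (intro conjI allI impI bijT)
    fix a b assume "le a b"
    moreover have "-(a + t) + (b + t) = -t + (-a + b) + t" by (simp only: minus_add add.assoc)
    ultimately show "le (T a) (T b)" unfolding le_def T_def using fconj[of t "-a + b"] by auto
  qed
  have domT: "dominant le T"
    unfolding dominant_def
  proof (intro allI)
    fix a b
    obtain n :: nat where n: "C + D - f (-b + a) < real n" using reals_Archimedean2 by blast
    have "f (-b + (a + gpow n t)) \<ge> f (-b + a) + f (gpow n t) - D"
      using fsum_ge[of "-b + a" "gpow n t"] by (simp add: add.assoc)
    moreover have "f (gpow n t) \<ge> real n" using Ft hom[of n t]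
      by (simp add: mult_le_cancel_left1)
    ultimately have "C \<le> f (-b + ((T ^^ n) a))" using n by (simp add: T_def funpow_T)
    thus "\<exists>n. le b ((T ^^ n) a) \<and> b \<noteq> (T ^^ n) a" using strict by blast
  qed
  have qt: "\<forall>a b. \<exists>k\<le>1. le a ((T ^^ k) b) \<or> le b ((T ^^ k) a)"
  proof (intro allI)
    fix a b
    have e1: "f (-a + (b + t)) \<ge> f (-a + b) + f t - D"
      using fsum_ge[of "-a + b" t] by (simp add: add.assoc)
    have e2: "f (-b + (a + t)) \<ge> f (-b + a) + f t - D"
      using fsum_ge[of "-b + a" t] by (simp add: add.assoc)
    have "-b + a = - (-a + b)" by (simp add: minus_add)
    hence e3: "f (-b + a) = - f (-a + b)" using fneg by simp
    have "le a (T b) \<or> le b (T a)"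
      unfolding le_def T_def using e1 e2 e3 t C_def by (cases "f (-a + b) \<ge> 0") auto
    thus "\<exists>k\<le>1. le a ((T ^^ k) b) \<or> le b ((T ^^ k) a)"
      by (intro exI[of _ 1]) simp
  qed
  have QT: "quasi_total_triple le T"
    unfolding quasi_total_triple_def using po opT domT qt by blast
  have AA: "action_by_automorphisms le T (\<lambda>g x. g + x)"
    unfolding action_by_automorphisms_def group_action_def
  proof (intro conjI allI)
    show "(\<lambda>x::'a. 0 + x) = id" by (rule ext) simp
  next
    fix g h :: 'a show "(\<lambda>x. g + h + x) = (\<lambda>x. g + x) \<circ> (\<lambda>x. h + x)"
      by (simp add: fun_eq_iff add.assoc)
  next
    fix g :: 'a
    have "bij (\<lambda>x. g + x)"
      by (rule o_bij[of "\<lambda>x. -g + x"]) (auto simp: fun_eq_iff add.assoc[symmetric])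
    moreover have "-(g + a) + (g + b) = -a + b" for a b
      by (simp add: minus_add add.assoc[symmetric])
    ultimately show "order_preserving_bij le (\<lambda>x. g + x)"
      unfolding order_preserving_bij_def le_def by auto
  next
    fix g :: 'a show "(\<lambda>x. g + x) \<circ> T = T \<circ> (\<lambda>x. g + x)"
      by (simp add: fun_eq_iff T_def add.assoc)
  qed
  have EF: "effective_action (\<lambda>g x::'a. g + x)"
    unfolding effective_action_def by (metis add.right_neutral id_apply)
  have DA: "dominating_action le T (\<lambda>g x. g + x)"
  proof -
    have "le ((T ^^ 0) 0) (0 + 0)" by (simp add: le_def)
    thus ?thesis unfolding dominating_action_def by blast
  qed
  have ind: "induced_order le (\<lambda>g x. g + x) = (\<lambda>g h. g = h \<or> D + 1 \<le> f (-g + h))"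
  proof (intro ext iffI)
    fix g h assume "induced_order le (\<lambda>g x. g + x) g h"
    hence "le (0 + g + 0) (0 + h + 0)" unfolding induced_order_def by blast
    thus "g = h \<or> D + 1 \<le> f (-g + h)" by (simp add: le_def C_def)
  next
    fix g h assume gh: "g = h \<or> D + 1 \<le> f (-g + h)"
    have "-(k + g + x) + (k + h + x) = -x + (-g + h) + x" for k x
      by (simp only: minus_add add.assoc minus_add_cancel)
    thus "induced_order le (\<lambda>g x. g + x) g h"
      unfolding induced_order_def le_def C_def using gh fconj by auto
  qed
  have DC: "t \<in> dominant_cone (induced_order le (\<lambda>g x. g + x))"
    unfolding ind dominant_cone_def pos_cone_def
  proof (intro CollectI conjI allI)
    show "0 = t \<or> D + 1 \<le> f (- 0 + t)" using t D_nonneg by simp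
    show "t \<noteq> 0" using Ft f0 by auto
  next
    fix h
    obtain n :: nat where n: "D + 1 + D + f h < real n" using reals_Archimedean2 by blast
    have "f (-h + gpow n t) \<ge> f (-h) + f (gpow n t) - D" by (rule fsum_ge)
    moreover have "f (gpow n t) \<ge> real n" using Ft hom[of n t]
      by (simp add: mult_le_cancel_left1)
    ultimately have "D + 1 \<le> f (-h + gpow n t)" using n fneg[of h] by simp
    thus "\<exists>n. h = gpow n t \<or> D + 1 \<le> f (-h + gpow n t)" by blast
  qed
  have GR: "\<forall>h. convergent (growth_seq (induced_order le (\<lambda>g x. g + x)) t h)"
    unfolding ind convergent_def using growth[OF t] by blast
  have FF: "\<forall>h. f h = f t * growth_function (induced_order le (\<lambda>g x. g + x)) t h"
  proof
    fix h
    have "growth_function (induced_order le (\<lambda>g x. g + x)) t h = f h / f t"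
      unfolding ind growth_function_def using growth[OF t] by (rule limI)
    thus "f h = f t * growth_function (induced_order le (\<lambda>g x. g + x)) t h" using Ft by simp
  qed
  show ?thesis using QT AA EF DA DC GR FF by blast
qed

end
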